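(* Suppose that $X\subseteq\mathbb{R}$ is a Bernstein set. Then \textsc{Bob} has a winning strategy in the game $\mathsf{BM}_\mathrm{fin}(X)$.
   Context: A set $X\subseteq\mathbb{R}$ is a Bernstein set if both $X$ and $\mathbb{R}\setminus X$ meet every uncountable closed subset of $\mathbb{R}$. $X$ carries the subspace topology. The game $\mathsf{BM}_\mathrm{fin}(X)$ is played by \textsc{Alice} and \textsc{Bob} as follows. \textsc{Alice} plays a non-empty open set $A_0$; \textsc{Bob} plays a finite collection $\mathcal{B}_0$ of non-empty open subsets of $A_0$. In inning $n+1$, for each $B \in \mathcal{B}_n$ \textsc{Alice} plays a non-empty open set $A_B \subseteq B$; let $\mathcal{A}_{n+1}=\{A_B : B\in\mathcal{B}_n\}$; then \textsc{Bob} plays a finite collection $\mathcal{B}_{n+1}$ of non-empty open subsets of $\bigcup\mathcal{A}_{n+1}$. Put $B_n=\bigcup\mathcal{B}_n$. \textsc{Bob} wins the play if $\bigcap_{n\in\omega}B_n\neq\emptyset$; otherwise \textsc{Alice} wins. *)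

theory Defs
  imports "HOL-Analysis.Analysis"
begin

definition bernstein_set :: "real set \<Rightarrow> bool" where
  "bernstein_set X \<longleftrightarrow>
     (\<forall>C::real set. closed C \<and> uncountable C \<longrightarrow> X \<inter> C \<noteq> {} \<and> (- X) \<inter> C \<noteq> {})"

definition nonempty_open_in :: "real set \<Rightarrow> real set \<Rightarrow> bool" where
  "nonempty_open_in X U \<longleftrightarrow> U \<noteq> {} \<and> openin (top_of_set X) U"

text \<open>A strategy for Bob: given Alice's first move A0 and the list of Alice's later
  moves (inning k+1 is a map B \<mapsto> A_B on Bob's previous collection), Bob produces
  his next finite collection.\<close>
type_synonym bob_strategy = "real set \<Rightarrow> (real set \<Rightarrow> real set) list \<Rightarrow> real set set"

definition bob_move :: "bob_strategy \<Rightarrow> real set \<Rightarrow> (nat \<Rightarrow> real set \<Rightarrow> real set) \<Rightarrow> nat \<Rightarrow> real set set" where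
  "bob_move \<sigma> A0 a n = \<sigma> A0 (map a [0..<n])"

definition alice_legal :: "real set \<Rightarrow> bob_strategy \<Rightarrow> real set \<Rightarrow> (nat \<Rightarrow> real set \<Rightarrow> real set) \<Rightarrow> nat \<Rightarrow> bool" where
  "alice_legal X \<sigma> A0 a k \<longleftrightarrow>
     (\<forall>B \<in> bob_move \<sigma> A0 a k. nonempty_open_in X (a k B) \<and> a k B \<subseteq> B)"

definition bob_legal :: "real set \<Rightarrow> bob_strategy \<Rightarrow> real set \<Rightarrow> (nat \<Rightarrow> real set \<Rightarrow> real set) \<Rightarrow> nat \<Rightarrow> bool" where
  "bob_legal X \<sigma> A0 a n \<longleftrightarrow>
     finite (bob_move \<sigma> A0 a n) \<and>
     (\<forall>B \<in> bob_move \<sigma> A0 a n. nonempty_open_in X B \<and>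
        B \<subseteq> (case n of 0 \<Rightarrow> A0
               | Suc k \<Rightarrow> \<Union>((a k) ` bob_move \<sigma> A0 a k)))"

definition bob_wins_BM_fin :: "real set \<Rightarrow> bool" where
  "bob_wins_BM_fin X \<longleftrightarrow>
     (\<exists>\<sigma>::bob_strategy. \<forall>A0 a. nonempty_open_in X A0 \<longrightarrow>
        (\<forall>n. (\<forall>k<n. alice_legal X \<sigma> A0 a k) \<longrightarrow> bob_legal X \<sigma> A0 a n) \<and>
        ((\<forall>k. alice_legal X \<sigma> A0 a k) \<longrightarrow> (\<Inter>n. \<Union>(bob_move \<sigma> A0 a n)) \<noteq> {}))"

end

theory Submission
  imports Defs
begin

lemma uncountable_nat_bool: "uncountable (UNIV :: (nat \<Rightarrow> bool) set)"
proof
  assume "countable (UNIV :: (nat \<Rightarrow> bool) set)"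
  then obtain f :: "nat \<Rightarrow> (nat \<Rightarrow> bool)" where f: "range f = UNIV"
    using uncountable_def by blast
  then obtain k where "f k = (\<lambda>n. \<not> f n n)" by (metis UNIV_I imageE)
  then show False by (metis (full_types))
qed

definition ctr :: "real set \<Rightarrow> real set \<Rightarrow> real \<times> real" where
  "ctr X A = (SOME p. fst p \<in> A \<and> snd p > 0 \<and> ball (fst p) (snd p) \<inter> X \<subseteq> A)"

definition cen :: "real set \<Rightarrow> real set \<Rightarrow> bool \<Rightarrow> real" where
  "cen X A b = (if b then fst (ctr X A) - snd (ctr X A) / 2 else fst (ctr X A) + snd (ctr X A) / 2)"

definition rad :: "real set \<Rightarrow> real set \<Rightarrow> real" where
  "rad X A = snd (ctr X A) / 8"

definition piece :: "real set \<Rightarrow> real set \<Rightarrow> bool \<Rightarrow> real set" where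
  "piece X A b = ball (cen X A b) (rad X A) \<inter> X"

definition Kc :: "real set \<Rightarrow> real set \<Rightarrow> bool \<Rightarrow> real set" where
  "Kc X A b = cball (cen X A b) (rad X A)"

lemma ctr_prop:
  assumes "nonempty_open_in X A"
  shows "fst (ctr X A) \<in> A \<and> snd (ctr X A) > 0 \<and> ball (fst (ctr X A)) (snd (ctr X A)) \<inter> X \<subseteq> A"
proof -
  from assms obtain x where x: "x \<in> A" and op: "openin (top_of_set X) A"
    unfolding nonempty_open_in_def by blast
  then obtain e where "e > 0" "ball x e \<inter> X \<subseteq> A"
    using openin_contains_ball by metis
  then have "\<exists>p. fst p \<in> A \<and> snd p > 0 \<and> ball (fst p) (snd p) \<inter> X \<subseteq> A"
    using x by (intro exI[of _ "(x, e)"]) auto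
  then show ?thesis unfolding ctr_def by (rule someI_ex)
qed

lemma Kc_sub:
  assumes "nonempty_open_in X A"
  shows "Kc X A b \<inter> X \<subseteq> A"
proof -
  have c: "fst (ctr X A) \<in> A" "snd (ctr X A) > 0" "ball (fst (ctr X A)) (snd (ctr X A)) \<inter> X \<subseteq> A"
    using ctr_prop[OF assms] by auto
  have "Kc X A b \<subseteq> ball (fst (ctr X A)) (snd (ctr X A))"
    unfolding Kc_def cen_def rad_def using c(2)
    by (auto simp: dist_real_def abs_if split: if_splits)
  then show ?thesis using c(3) by blast
qed

lemma piece_sub_Kc: "piece X A b \<subseteq> Kc X A b"
  unfolding piece_def Kc_def by auto

lemma Kc_disj:
  assumes "nonempty_open_in X A"
  shows "Kc X A True \<inter> Kc X A False = {}"
proof -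
  have "snd (ctr X A) > 0" using ctr_prop[OF assms] by auto
  then show ?thesis unfolding Kc_def cen_def rad_def
    by (auto simp: dist_real_def abs_if split: if_splits)
qed

lemma piece_ok:
  assumes "bernstein_set X" "nonempty_open_in X A"
  shows "nonempty_open_in X (piece X A b) \<and> piece X A b \<subseteq> A"
proof -
  have r: "rad X A > 0" using ctr_prop[OF assms(2)] unfolding rad_def by auto
  have "uncountable (cball (cen X A b) (rad X A / 2))"
    using r by (intro uncountable_cball) auto
  then have "X \<inter> cball (cen X A b) (rad X A / 2) \<noteq> {}"
    using assms(1) unfolding bernstein_set_def by blast
  moreover have "cball (cen X A b) (rad X A / 2) \<subseteq> ball (cen X A b) (rad X A)"
    using r by auto
  ultimately have ne: "piece X A b \<noteq> {}" unfolding piece_def by blast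
  have op: "openin (top_of_set X) (piece X A b)"
    unfolding piece_def by (metis Int_commute open_ball openin_open_Int)
  have "piece X A b \<subseteq> A" using Kc_sub[OF assms(2), of b] piece_sub_Kc[of X A b]
    unfolding piece_def by blast
  then show ?thesis using ne op unfolding nonempty_open_in_def by blast
qed

lemma fin_bl: "finite {s::bool list. length s = n}"
  using finite_lists_length_eq[of "UNIV::bool set" n] by simp

primrec tree :: "real set \<Rightarrow> real set \<Rightarrow> (nat \<Rightarrow> real set \<Rightarrow> real set) \<Rightarrow> nat \<Rightarrow> bool list \<Rightarrow> real set" where
  "tree X A0 a 0 s = A0"
| "tree X A0 a (Suc n) s = piece X (a n (tree X A0 a n (butlast s))) (last s)"

lemma tree_cong: "(\<And>k. k < n \<Longrightarrow> f k = g k) \<Longrightarrow> tree X A0 f n s = tree X A0 g n s"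
  by (induction n arbitrary: s) auto

theorem proposition2p5:
  fixes X :: "real set"
  assumes B: "bernstein_set X"
  shows "bob_wins_BM_fin X"
proof -
  define \<sigma> :: bob_strategy where
    "\<sigma> = (\<lambda>A0 as. (\<lambda>s. tree X A0 (\<lambda>k. as ! k) (length as) s) ` {s. length s = length as})"
  have bm: "bob_move \<sigma> A0 a n = tree X A0 a n ` {s. length s = n}" for A0 a n
  proof -
    have "tree X A0 (\<lambda>k. map a [0..<n] ! k) n s = tree X A0 a n s" for s
      by (rule tree_cong) simp
    then show ?thesis unfolding bob_move_def \<sigma>_def by simp
  qed
  show ?thesis unfolding bob_wins_BM_fin_def
  proof (intro exI allI impI conjI)
    fix A0 a
    assume ne: "nonempty_open_in X A0"
    have ok: "\<And>s. length s = n \<Longrightarrow> nonempty_open_in X (tree X A0 a n s)"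
      if "\<forall>k<n. alice_legal X \<sigma> A0 a k" for n
      using that
    proof (induction n)
      case 0
      then show ?case using ne by simp
    next
      case (Suc n)
      have "tree X A0 a n (butlast s) \<in> bob_move \<sigma> A0 a n" using Suc.prems bm by auto
      then have "nonempty_open_in X (a n (tree X A0 a n (butlast s)))"
        using Suc.prems unfolding alice_legal_def by (meson lessI)
      then show ?case using piece_ok[OF B] by simp
    qed
    show "bob_legal X \<sigma> A0 a n" if al: "\<forall>k<n. alice_legal X \<sigma> A0 a k" for n
      unfolding bob_legal_def
    proof (intro conjI ballI)
      show "finite (bob_move \<sigma> A0 a n)" unfolding bm
        by (intro finite_imageI fin_bl)
    next
      fix Bs assume "Bs \<in> bob_move \<sigma> A0 a n"
      then obtain s where s: "length s = n" "Bs = tree X A0 a n s" using bm by auto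
      show "nonempty_open_in X Bs" using ok[OF al s(1)] s by simp
      show "Bs \<subseteq> (case n of 0 \<Rightarrow> A0 | Suc k \<Rightarrow> \<Union>((a k) ` bob_move \<sigma> A0 a k))"
      proof (cases n)
        case 0 then show ?thesis using s by simp
      next
        case (Suc k)
        have mem: "tree X A0 a k (butlast s) \<in> bob_move \<sigma> A0 a k" using s Suc bm by auto
        then have "nonempty_open_in X (a k (tree X A0 a k (butlast s)))"
          using al Suc unfolding alice_legal_def by auto
        then have "Bs \<subseteq> a k (tree X A0 a k (butlast s))"
          using piece_ok[OF B] s Suc by simp
        then show ?thesis using mem Suc by auto
      qed
    qed
    assume alall: "\<forall>k. alice_legal X \<sigma> A0 a k"
    have ok2: "\<And>n s. length s = n \<Longrightarrow> nonempty_open_in X (tree X A0 a n s)"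
      using ok alall by blast
    have alA: "nonempty_open_in X (a n (tree X A0 a n s)) \<and> a n (tree X A0 a n s) \<subseteq> tree X A0 a n s"
      if "length s = n" for n s
    proof -
      have "tree X A0 a n s \<in> bob_move \<sigma> A0 a n" using that bm by auto
      then show ?thesis using alall unfolding alice_legal_def by auto
    qed
    define L where "L n = (\<Union>s\<in>{s. length s = Suc n}. Kc X (a n (tree X A0 a n (butlast s))) (last s))" for n
    define C where "C = (\<Inter>n. L n)"
    have clC: "closed C" unfolding C_def L_def Kc_def
      by (intro closed_INT ballI closed_Union) (auto intro: finite_imageI fin_bl)
    define T where "T f j = tree X A0 a (Suc j) (map f [0..<Suc j])" for f :: "nat \<Rightarrow> bool" and j
    have Tdef: "T f j = piece X (a j (tree X A0 a j (map f [0..<j]))) (f j)" for f j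
      unfolding T_def by simp
    have TK: "T f j \<subseteq> Kc X (a j (tree X A0 a j (map f [0..<j]))) (f j)" for f j
      unfolding Tdef by (rule piece_sub_Kc)
    have Tne: "T f j \<noteq> {}" for f j
      using ok2[of "map f [0..<Suc j]" "Suc j"] unfolding T_def nonempty_open_in_def by simp
    have Tdec: "T f (Suc j) \<subseteq> T f j" for f j
    proof -
      have lj: "length (map f [0..<Suc j]) = Suc j" by simp
      have e: "T f (Suc j) = piece X (a (Suc j) (T f j)) (f (Suc j))"
        using Tdef[of f "Suc j"] by (simp only: T_def[of f j, symmetric])
      have "T f (Suc j) \<subseteq> a (Suc j) (T f j)"
        unfolding e using piece_ok[OF B conjunct1[OF alA[OF lj]]] unfolding T_def by blast
      also have "\<dots> \<subseteq> T f j" using alA[OF lj] unfolding T_def by simp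
      finally show ?thesis .
    qed
    have "\<exists>q. \<forall>j. q \<in> closure (T f j)" for f
    proof -
      have dec: "m \<le> n \<Longrightarrow> T f n \<subseteq> T f m" for m n
        by (induction n rule: dec_induct) (use Tdec in blast)+
      have "bounded (closure (T f 0))"
        using TK[of f 0] unfolding Kc_def by (meson bounded_cball bounded_closure bounded_subset)
      then obtain q where "\<And>n. q \<in> closure (T f n)"
        using bounded_closed_nest[of "\<lambda>n. closure (T f n)"] dec Tne
        by (metis closed_closure closure_eq_empty closure_mono)
      then show ?thesis by blast
    qed
    then obtain p where p: "\<And>f j. p f \<in> closure (T f j)" by metis
    have pK: "p f \<in> Kc X (a j (tree X A0 a j (map f [0..<j]))) (f j)" for f j
      using p[of f j] closure_minimal[OF TK[of f j]] unfolding Kc_def by auto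
    have pC: "p f \<in> C" for f
      unfolding C_def L_def
    proof (intro InterI, clarsimp)
      fix n
      show "\<exists>s. length s = Suc n \<and> p f \<in> Kc X (a n (tree X A0 a n (butlast s))) (last s)"
        using pK[of f n] by (intro exI[of _ "map f [0..<Suc n]"]) simp
    qed
    have inj: "inj p"
    proof
      fix f g assume eq: "p f = p g"
      show "f = g"
      proof (rule ccontr)
        assume "f \<noteq> g"
        then have "\<exists>m. f m \<noteq> g m" by auto
        define m where "m = (LEAST m. f m \<noteq> g m)"
        have fm: "f m \<noteq> g m" using LeastI_ex[OF \<open>\<exists>m. f m \<noteq> g m\<close>] unfolding m_def .
        have "\<forall>k<m. f k = g k"
        proof (intro allI impI)
          fix k assume "k < m"
          then show "f k = g k" using not_less_Least[of k "\<lambda>m. f m \<noteq> g m"] unfolding m_def by blast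
        qed
        then have mp: "map f [0..<m] = map g [0..<m]" by simp
        define A where "A = a m (tree X A0 a m (map f [0..<m]))"
        have neA: "nonempty_open_in X A" unfolding A_def using alA[of "map f [0..<m]" m] by simp
        have "p f \<in> Kc X A (f m)" "p g \<in> Kc X A (g m)"
          using pK[of f m] pK[of g m] unfolding A_def mp by simp_all
        then show False using Kc_disj[OF neA] eq fm by (cases "f m") auto
      qed
    qed
    have "uncountable C"
    proof
      assume "countable C"
      then have "countable (range p)" using pC by (meson countable_subset image_subset_iff)
      then show False using inj uncountable_nat_bool countable_image_inj_on by blast
    qed
    then obtain y where y: "y \<in> X" "y \<in> C" using B clC unfolding bernstein_set_def by blast
    have "y \<in> \<Union>(bob_move \<sigma> A0 a n)" for n
    proof -
      from y(2) obtain s where s: "length s = Suc n"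
        "y \<in> Kc X (a n (tree X A0 a n (butlast s))) (last s)"
        unfolding C_def L_def by blast
      have bl: "length (butlast s) = n" using s by simp
      have "y \<in> a n (tree X A0 a n (butlast s))"
        using Kc_sub[OF conjunct1[OF alA[OF bl]]] s(2) y(1) by blast
      then have "y \<in> tree X A0 a n (butlast s)" using alA[OF bl] by blast
      moreover have "tree X A0 a n (butlast s) \<in> bob_move \<sigma> A0 a n" using bl bm by auto
      ultimately show ?thesis by blast
    qed
    then show "(\<Inter>n. \<Union>(bob_move \<sigma> A0 a n)) \<noteq> {}" by blast
  qed
qed

end
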